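(* There exists a sequence $\{a_n\}_{n\geq 0}$ with $a_n\in\{0,1\}$ for all $n$ such that $\{a^*_n\}_{n\geq 0}$ converges to $0$ and $\{a^p_n\}_{n\geq 0}$ diverges for every $0<p<1$.
   Context: For a real sequence $\{a_n\}_{n\geq0}$ and $0<p<1$, $a^*_n=\frac{1}{n+1}\sum_{i=0}^n a_i$ and $a^p_n=\sum_{i=0}^n\binom{n}{i}p^i(1-p)^{n-i}a_i$. *)

theory Defs
  imports Complex_Main
begin

definition cesaro_mean :: "(nat \<Rightarrow> real) \<Rightarrow> nat \<Rightarrow> real" where
  "cesaro_mean a n = (1 / real (n + 1)) * (\<Sum>i=0..n. a i)"

definition binomial_mean :: "real \<Rightarrow> (nat \<Rightarrow> real) \<Rightarrow> nat \<Rightarrow> real" where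
  "binomial_mean p a n = (\<Sum>i=0..n. real (n choose i) * p ^ i * (1 - p) ^ (n - i) * a i)"

end

theory Submission
  imports Defs "HOL-Real_Asymp.Real_Asymp"
begin


definition bn :: "real \<Rightarrow> nat \<Rightarrow> nat \<Rightarrow> real" where
  "bn p n i = real (n choose i) * p ^ i * (1 - p) ^ (n - i)"

lemma bn_nonneg: "0 \<le> p \<Longrightarrow> p \<le> 1 \<Longrightarrow> 0 \<le> bn p n i"
  unfolding bn_def by simp

lemma bn_sum: "(\<Sum>i\<le>n. bn p n i) = 1"
  using binomial_ring[of p "1 - p" n] by (simp add: bn_def)

lemma bn_shift: "bn p (Suc m) (Suc j) * real (Suc j) = real (Suc m) * p * bn p m j"
proof -
  have e: "real (Suc j) * real (Suc m choose Suc j) = real (Suc m) * real (m choose j)"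
    by (metis Suc_times_binomial of_nat_mult)
  have "bn p (Suc m) (Suc j) * real (Suc j) = (real (Suc j) * real (Suc m choose Suc j)) * (p * p^j * (1-p)^(m-j))"
    unfolding bn_def power_Suc diff_Suc_Suc by (simp only: mult_ac)
  also have "\<dots> = (real (Suc m) * real (m choose j)) * (p * p^j * (1-p)^(m-j))"
    by (simp only: e)
  also have "\<dots> = real (Suc m) * p * bn p m j"
    unfolding bn_def by (simp only: mult_ac)
  finally show ?thesis .
qed

lemma bn_m1: "(\<Sum>i\<le>n. bn p n i * real i) = real n * p"
proof (cases n)
  case 0 then show ?thesis by simp
next
  case (Suc m)
  have "(\<Sum>i\<le>Suc m. bn p (Suc m) i * real i) = (\<Sum>j\<le>m. bn p (Suc m) (Suc j) * real (Suc j))"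
    by (subst sum.atMost_Suc_shift) simp
  also have "\<dots> = (\<Sum>j\<le>m. real (Suc m) * p * bn p m j)"
    by (simp only: bn_shift)
  also have "\<dots> = real (Suc m) * p"
    by (simp add: sum_distrib_left[symmetric] bn_sum)
  finally show ?thesis using Suc by simp
qed

lemma bn_m2: "(\<Sum>i\<le>n. bn p n i * (real i * (real i - 1))) = real n * (real n - 1) * p^2"
proof (cases n)
  case 0 then show ?thesis by simp
next
  case (Suc m)
  have "(\<Sum>i\<le>Suc m. bn p (Suc m) i * (real i * (real i - 1))) = (\<Sum>j\<le>m. bn p (Suc m) (Suc j) * real (Suc j) * real j)"
    by (subst sum.atMost_Suc_shift) (simp add: algebra_simps)
  also have "\<dots> = (\<Sum>j\<le>m. real (Suc m) * p * (bn p m j * real j))"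
    by (simp only: bn_shift mult.assoc)
  also have "\<dots> = real (Suc m) * p * (real m * p)"
    by (simp add: sum_distrib_left[symmetric] bn_m1)
  finally show ?thesis using Suc by (simp add: power2_eq_square algebra_simps)
qed

lemma bn_var: "(\<Sum>i\<le>n. bn p n i * (real i - real n * p)^2) = real n * p * (1 - p)"
proof -
  have "(\<Sum>i\<le>n. bn p n i * (real i - real n * p)^2) =
     (\<Sum>i\<le>n. bn p n i * (real i * (real i - 1)) + (1 - 2 * real n * p) * (bn p n i * real i) + (real n * p)^2 * bn p n i)"
    by (rule sum.cong) (auto simp: power2_eq_square algebra_simps)
  also have "\<dots> = real n * (real n - 1) * p^2 + (1 - 2 * real n * p) * (real n * p) + (real n * p)^2"
    by (simp add: sum.distrib sum_distrib_left[symmetric] bn_m1 bn_m2 bn_sum)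
  finally show ?thesis by (simp add: power2_eq_square algebra_simps)
qed

lemma cheb:
  assumes "0 \<le> p" "p \<le> 1" "t > 0"
  shows "(\<Sum>i\<le>n. bn p n i * (if t \<le> \<bar>real i - real n * p\<bar> then 1 else 0)) \<le> real n / t^2"
proof -
  have "(\<Sum>i\<le>n. bn p n i * (if t \<le> \<bar>real i - real n * p\<bar> then 1 else 0))
     \<le> (\<Sum>i\<le>n. bn p n i * ((real i - real n * p)^2 / t^2))"
  proof (rule sum_mono)
    fix i
    have "(if t \<le> \<bar>real i - real n * p\<bar> then 1 else 0) \<le> (real i - real n * p)^2 / t^2"
    proof (cases "t \<le> \<bar>real i - real n * p\<bar>")
      case True
      then have "t^2 \<le> \<bar>real i - real n * p\<bar>^2" using assms by (intro power_mono) auto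
      then show ?thesis using True assms by simp
    qed simp
    then show "bn p n i * (if t \<le> \<bar>real i - real n * p\<bar> then 1 else 0) \<le> bn p n i * ((real i - real n * p)^2 / t^2)"
      using bn_nonneg[OF assms(1,2)] by (intro mult_left_mono) auto
  qed
  also have "\<dots> = real n * p * (1 - p) / t^2"
    by (simp add: sum_divide_distrib[symmetric] bn_var)
  also have "\<dots> \<le> real n / t^2"
  proof -
    have "p * (1 - p) \<le> p" using assms by (intro mult_left_le) auto
    then have "p * (1 - p) \<le> 1" using assms by linarith
    then have "real n * (p * (1 - p)) \<le> real n" by (intro mult_left_le) auto
    then show ?thesis using assms by (intro divide_right_mono) (auto simp: mult.assoc)
  qed
  finally show ?thesis .
qed

definition blk :: "nat \<Rightarrow> nat set" where
  "blk k = {4^k - k*2^k .. 4^k + k*2^k}"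

definition aseq :: "nat \<Rightarrow> real" where
  "aseq i = (if \<exists>k. i \<in> blk k then 1 else 0)"

lemma two_le: "2 * k \<le> (2::nat) ^ k"
proof (induction k)
  case (Suc k)
  show ?case
  proof (cases "k = 0")
    case False
    then have "2 \<le> (2::nat)^k" using power_increasing[of 1 k "2::nat"] by simp
    then show ?thesis using Suc by simp
  qed simp
qed simp

lemma sixteen: "3 \<le> j \<Longrightarrow> 16 * j \<le> 7 * (2::nat) ^ j"
proof (induction j rule: dec_induct)
  case base then show ?case by simp
next
  case (step j)
  have "8 \<le> (2::nat)^j" using step(1) power_increasing[of 3 j "2::nat"] by simp
  then show ?case using step by simp
qed

lemma four_eq: "(4::real)^k = 2^k * 2^k"
  by (simp flip: power_mult_distrib)

lemma r1: "2 * (real k * 2^k) \<le> (4::real)^k"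
proof -
  have "real (2 * k) \<le> real ((2::nat)^k)" using two_le by (simp only: of_nat_le_iff)
  then have "2 * real k \<le> (2::real)^k" by simp
  then have "2 * real k * 2^k \<le> (2::real)^k * 2^k" by (intro mult_right_mono) auto
  then show ?thesis by (simp add: four_eq mult.assoc)
qed

lemma r2: "3 \<le> j \<Longrightarrow> real j * 2^j \<le> 7/16 * (4::real)^j"
proof -
  assume "3 \<le> j"
  then have "real (16 * j) \<le> real (7 * (2::nat)^j)" using sixteen by (simp only: of_nat_le_iff)
  then have "16 * real j \<le> 7 * (2::real)^j" by simp
  then have "16 * real j * 2^j \<le> 7 * (2::real)^j * 2^j" by (intro mult_right_mono) auto
  then show ?thesis by (simp add: four_eq mult.assoc)
qed

lemma kk: "k * 2^k \<le> (4::nat)^k"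
proof -
  have "real (k * 2^k) \<le> real ((4::nat)^k)" using r1[of k] by (simp del: of_nat_le_iff; smt (verit) zero_le_power of_nat_0_le_iff mult_nonneg_nonneg)
  then show ?thesis by (simp only: of_nat_le_iff)
qed

lemma blk_iff: "i \<in> blk k \<longleftrightarrow> \<bar>real i - 4^k\<bar> \<le> real k * 2^k"
proof -
  have "real (4^k - k*2^k) = 4^k - real k * 2^k" using kk[of k] by (simp add: of_nat_diff)
  moreover have "real (4^k + k*2^k) = 4^k + real k * 2^k" by simp
  ultimately show ?thesis unfolding blk_def atLeastAtMost_iff
    by (smt (verit) of_nat_le_iff)
qed

lemma aseq_01: "aseq i \<in> {0, 1}" by (simp add: aseq_def)

lemma far:
  assumes "2 \<le> k" "aseq i = 1"
  shows "4^k / 4 \<le> \<bar>real i - 2 * 4^k\<bar>"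
proof -
  obtain j where j: "i \<in> blk j" using assms(2) by (auto simp: aseq_def split: if_splits)
  then have ij: "\<bar>real i - 4^j\<bar> \<le> real j * 2^j" by (simp add: blk_iff)
  show ?thesis
  proof (cases "j \<le> k")
    case True
    have "(4::real)^j \<le> 4^k" using True by (intro power_increasing) auto
    moreover have "real j * (2::real)^j \<le> real k * 2^k"
      using True by (intro mult_mono power_increasing) auto
    moreover have "2 * (real k * 2^k) \<le> (4::real)^k" by (rule r1)
    ultimately show ?thesis using ij by linarith
  next
    case False
    then have j3: "3 \<le> j" "Suc k \<le> j" using assms by auto
    have "(4::real)^Suc k \<le> 4^j" using j3 by (intro power_increasing) auto
    then have "4 * (4::real)^k \<le> 4^j" by simp
    moreover have "real j * 2^j \<le> 7/16 * (4::real)^j" using r2 j3 by blast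
    ultimately show ?thesis using ij by linarith
  qed
qed

lemma bm_eq: "binomial_mean p a n = (\<Sum>i\<le>n. bn p n i * a i)"
  unfolding binomial_mean_def bn_def atMost_atLeast0 by simp

lemma side1:
  assumes p: "0 < p" "p < 1" and k: "1 \<le> k" and n: "n = nat \<lfloor>4^k / p\<rfloor>"
  shows "1 - 4 / (p * real k ^ 2) \<le> binomial_mean p aseq n"
proof -
  define x where "x = (4::real)^k / p"
  have x0: "0 \<le> x" using p by (simp add: x_def)
  have rn: "real n = of_int \<lfloor>x\<rfloor>" using x0 by (simp add: n x_def)
  have n1: "x - 1 < real n" "real n \<le> x" unfolding rn by linarith+
  have np1: "4^k - p < real n * p" "real n * p \<le> 4^k"
  proof -
    have "(x - 1) * p < real n * p" using n1 p by (intro mult_strict_right_mono) auto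
    then show "4^k - p < real n * p" using p by (simp add: x_def algebra_simps)
    have "real n * p \<le> x * p" using n1 p by (intro mult_right_mono) auto
    then show "real n * p \<le> 4^k" using p by (simp add: x_def)
  qed
  define t where "t = real k * 2^k - 1"
  have k2: "2 \<le> real k * 2^k"
  proof -
    have "(2::real) ^ 1 \<le> 2^k" using k by (intro power_increasing) auto
    moreover have "1 \<le> real k" using k by simp
    ultimately have "1 * 2 \<le> real k * 2^k" by (intro mult_mono) auto
    then show ?thesis by simp
  qed
  have t2: "real k * 2^k / 2 \<le> t" "0 < t" using k2 by (auto simp: t_def)
  let ?ind = "\<lambda>i. if t \<le> \<bar>real i - real n * p\<bar> then 1 else (0::real)"
  have "(\<Sum>i\<le>n. bn p n i * (1 - ?ind i)) \<le> (\<Sum>i\<le>n. bn p n i * aseq i)"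
  proof (rule sum_mono)
    fix i
    show "bn p n i * (1 - ?ind i) \<le> bn p n i * aseq i"
    proof (cases "t \<le> \<bar>real i - real n * p\<bar>")
      case True
      then show ?thesis using bn_nonneg[of p n i] p by (simp add: aseq_def)
    next
      case False
      then have "\<bar>real i - 4^k\<bar> \<le> real k * 2^k" using np1 p unfolding t_def by linarith
      then have "aseq i = 1" by (auto simp: aseq_def blk_iff)
      then show ?thesis using False by simp
    qed
  qed
  then have "1 - (\<Sum>i\<le>n. bn p n i * ?ind i) \<le> binomial_mean p aseq n"
    by (simp add: bm_eq right_diff_distrib sum_subtractf bn_sum)
  moreover have "(\<Sum>i\<le>n. bn p n i * ?ind i) \<le> real n / t^2"
    using p t2 by (intro cheb) auto
  moreover have "real n / t^2 \<le> x / (real k * 2^k / 2)^2"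
  proof (rule frac_le)
    show "0 < (real k * 2 ^ k / 2)^2" using k2 k by simp
    show "(real k * 2 ^ k / 2)^2 \<le> t^2" using t2 k2 by (intro power_mono) auto
  qed (use n1 x0 in auto)
  moreover have "x / (real k * 2^k / 2)^2 = 4 / (p * real k ^ 2)"
    using p k by (simp add: x_def four_eq field_simps power2_eq_square)
  ultimately show ?thesis by linarith
qed

lemma side2:
  assumes p: "0 < p" "p < 1" and k: "2 \<le> k" and n: "n = nat \<lfloor>2 * 4^k / p\<rfloor>"
  shows "binomial_mean p aseq n \<le> 128 / (p * 4^k)"
proof -
  define x where "x = 2 * (4::real)^k / p"
  have x0: "0 \<le> x" using p by (simp add: x_def)
  have rn: "real n = of_int \<lfloor>x\<rfloor>" using x0 by (simp add: n x_def)
  have n1: "x - 1 < real n" "real n \<le> x" unfolding rn by linarith+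
  have np1: "2 * 4^k - p < real n * p" "real n * p \<le> 2 * 4^k"
  proof -
    have "(x - 1) * p < real n * p" using n1 p by (intro mult_strict_right_mono) auto
    then show "2 * 4^k - p < real n * p" using p by (simp add: x_def algebra_simps)
    have "real n * p \<le> x * p" using n1 p by (intro mult_right_mono) auto
    then show "real n * p \<le> 2 * 4^k" using p by (simp add: x_def)
  qed
  define t where "t = (4::real)^k / 8"
  have k16: "(16::real) \<le> 4^k"
  proof -
    have "(4::real)^2 \<le> 4^k" using k by (intro power_increasing) auto
    then show ?thesis by simp
  qed
  have t0: "0 < t" by (simp add: t_def)
  let ?ind = "\<lambda>i. if t \<le> \<bar>real i - real n * p\<bar> then 1 else (0::real)"
  have "(\<Sum>i\<le>n. bn p n i * aseq i) \<le> (\<Sum>i\<le>n. bn p n i * ?ind i)"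
  proof (rule sum_mono)
    fix i
    show "bn p n i * aseq i \<le> bn p n i * ?ind i"
    proof (cases "aseq i = 1")
      case True
      then have "4^k / 4 \<le> \<bar>real i - 2 * 4^k\<bar>" using far k by blast
      then have "t \<le> \<bar>real i - real n * p\<bar>" using np1 p k16 unfolding t_def by linarith
      then show ?thesis using True by simp
    next
      case False
      then have "aseq i = 0" by (simp add: aseq_def split: if_splits)
      then show ?thesis using bn_nonneg[of p n i] p by simp
    qed
  qed
  moreover have "(\<Sum>i\<le>n. bn p n i * ?ind i) \<le> real n / t^2"
    using p t0 by (intro cheb) auto
  moreover have "real n / t^2 \<le> x / t^2"
    using n1 t0 by (intro divide_right_mono) auto
  moreover have "x / t^2 = 128 / (p * 4^k)"
    using p by (simp add: x_def t_def field_simps power2_eq_square)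
  ultimately show ?thesis by (simp add: bm_eq)
qed

lemma gasym: "((\<lambda>x::real. (log 2 (sqrt (2*x)) + 1) * (2 * log 2 (sqrt (2*x)) * sqrt (2*x) + 1) / (x + 1)) \<longlongrightarrow> 0) at_top"
  by real_asymp

lemma cnt:
  assumes N: "1 \<le> N"
  defines "M \<equiv> sqrt (2 * real N)"
  defines "L \<equiv> log 2 M"
  shows "(\<Sum>i=0..N. aseq i) \<le> (L + 1) * (2 * L * M + 1)"
proof -
  define K where "K = nat \<lfloor>L\<rfloor>"
  have M1: "1 < M" using N by (simp add: M_def)
  have L0: "0 < L" using M1 by (simp add: L_def)
  have KL: "real K \<le> L" using L0 by (simp add: K_def)
  have key: "k \<le> K" if "i \<le> N" "i \<in> blk k" for i k
  proof -
    have "\<bar>real i - 4^k\<bar> \<le> real k * 2^k" using that by (simp add: blk_iff)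
    moreover have "2 * (real k * 2^k) \<le> (4::real)^k" by (rule r1)
    moreover have "real i \<le> real N" using that by simp
    ultimately have "(4::real)^k \<le> 2 * real N" by linarith
    then have "(2::real)^k * 2^k \<le> 2 * real N" by (simp add: four_eq)
    then have "sqrt ((2::real)^k * 2^k) \<le> M" unfolding M_def by (simp only: real_sqrt_le_iff)
    then have "(2::real)^k \<le> M" by (simp add: real_sqrt_mult)
    then have "log 2 ((2::real)^k) \<le> L" unfolding L_def using M1 by (subst log_le_cancel_iff) auto
    then have "real k \<le> L" by (simp add: log_nat_power)
    then have "int k \<le> \<lfloor>L\<rfloor>" by (simp add: le_floor_iff)
    then show ?thesis by (simp add: K_def)
  qed
  have "(\<Sum>i=0..N. aseq i) \<le> (\<Sum>i=0..N. \<Sum>k\<le>K. if i \<in> blk k then 1 else (0::real))"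
  proof (rule sum_mono)
    fix i assume i: "i \<in> {0..N}"
    show "aseq i \<le> (\<Sum>k\<le>K. if i \<in> blk k then 1 else (0::real))"
    proof (cases "\<exists>k. i \<in> blk k")
      case True
      then obtain k where k: "i \<in> blk k" by blast
      then have "k \<in> {..K}" using key i by auto
      then have "(if i \<in> blk k then 1 else (0::real)) \<le> (\<Sum>k\<le>K. if i \<in> blk k then 1 else (0::real))"
        by (intro member_le_sum) auto
      then show ?thesis using k by (simp add: aseq_def)
    next
      case False
      then show ?thesis by (simp add: aseq_def sum_nonneg)
    qed
  qed
  also have "\<dots> = (\<Sum>k\<le>K. \<Sum>i=0..N. if i \<in> blk k then 1 else (0::real))"
    by (rule sum.swap)
  also have "\<dots> \<le> (\<Sum>k\<le>K. 2 * L * M + 1)"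
  proof (rule sum_mono)
    fix k assume k: "k \<in> {..K}"
    have "(\<Sum>i=0..N. if i \<in> blk k then 1 else (0::real)) = real (card ({0..N} \<inter> blk k))"
      by (simp add: sum.inter_restrict[symmetric])
    also have "\<dots> \<le> real (card (blk k))"
    proof -
      have "card ({0..N} \<inter> blk k) \<le> card (blk k)" by (rule card_mono) (auto simp: blk_def)
      then show ?thesis by (simp only: of_nat_le_iff)
    qed
    also have "card (blk k) = 2 * k * 2^k + 1" using kk[of k] by (simp add: blk_def)
    also have "real (2 * k * 2^k + 1) = 2 * real k * 2^k + 1" by simp
    also have "\<dots> \<le> 2 * L * M + 1"
    proof -
      have kl: "real k \<le> L" using k KL by auto
      have "(2::real)^k = 2 powr real k" by (simp add: powr_realpow)
      also have "\<dots> \<le> 2 powr L" using kl by (intro powr_mono) auto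
      also have "\<dots> = M" unfolding L_def using M1 by simp
      finally have "(2::real)^k \<le> M" .
      then have "real k * 2^k \<le> L * M" using kl L0 by (intro mult_mono) auto
      then show ?thesis by simp
    qed
    finally show "(\<Sum>i=0..N. if i \<in> blk k then 1 else (0::real)) \<le> 2 * L * M + 1" .
  qed
  also have "\<dots> = (real K + 1) * (2 * L * M + 1)" by simp
  also have "\<dots> \<le> (L + 1) * (2 * L * M + 1)"
    using KL L0 M1 by (intro mult_right_mono) auto
  finally show ?thesis .
qed

lemma cesaro: "cesaro_mean aseq \<longlonglongrightarrow> 0"
proof -
  define f where "f = (\<lambda>x::real. (log 2 (sqrt (2*x)) + 1) * (2 * log 2 (sqrt (2*x)) * sqrt (2*x) + 1) / (x + 1))"
  have f: "(\<lambda>N. f (real N)) \<longlonglongrightarrow> 0"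
    using filterlim_compose[OF gasym[folded f_def] filterlim_real_sequentially] by simp
  show ?thesis
  proof (rule tendsto_sandwich[OF _ _ tendsto_const f])
    show "\<forall>\<^sub>F N in sequentially. 0 \<le> cesaro_mean aseq N"
      by (intro always_eventually allI) (simp add: cesaro_mean_def sum_nonneg aseq_def)
    show "\<forall>\<^sub>F N in sequentially. cesaro_mean aseq N \<le> f (real N)"
    proof (rule eventually_sequentiallyI[of 1])
      fix N :: nat assume N: "1 \<le> N"
      have "cesaro_mean aseq N = (\<Sum>i=0..N. aseq i) / (real N + 1)"
        by (simp add: cesaro_mean_def)
      also have "\<dots> \<le> f (real N)"
        unfolding f_def using cnt[OF N] by (intro divide_right_mono) auto
      finally show "cesaro_mean aseq N \<le> f (real N)" .
    qed
  qed
qed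


theorem proposition4:
  shows "\<exists>a :: nat \<Rightarrow> real. (\<forall>n. a n \<in> {0, 1}) \<and>
           cesaro_mean a \<longlonglongrightarrow> 0 \<and>
           (\<forall>p::real. 0 < p \<and> p < 1 \<longrightarrow> \<not> convergent (binomial_mean p a))"
proof (rule exI[of _ aseq], intro conjI)
  show "\<forall>n. aseq n \<in> {0, 1}" using aseq_01 by blast
  show "cesaro_mean aseq \<longlonglongrightarrow> 0" by (rule cesaro)
  show "\<forall>p::real. 0 < p \<and> p < 1 \<longrightarrow> \<not> convergent (binomial_mean p aseq)"
  proof (intro allI impI notI)
    fix p :: real assume p: "0 < p \<and> p < 1"
    assume "convergent (binomial_mean p aseq)"
    then have "Cauchy (binomial_mean p aseq)" by (rule convergent_Cauchy)
    from CauchyD[OF this, of "1/2"] obtain N where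
      N: "\<forall>m\<ge>N. \<forall>n\<ge>N. norm (binomial_mean p aseq m - binomial_mean p aseq n) < 1/2" by auto
    define k where "k = max (max N 2) (nat \<lceil>512 / p\<rceil>)"
    have k2: "2 \<le> k" and kN: "N \<le> k" unfolding k_def by auto
    have kp: "512 / p \<le> real k"
    proof -
      have "512 / p \<le> real (nat \<lceil>512 / p\<rceil>)" by (rule real_nat_ceiling_ge)
      moreover have "nat \<lceil>512 / p\<rceil> \<le> k" unfolding k_def by auto
      ultimately show ?thesis by (meson of_nat_le_iff order.trans)
    qed
    have k4: "real k \<le> 4^k"
    proof -
      have "k < 2^k" by (rule less_exp)
      also have "(2::nat)^k \<le> 4^k" by (intro power_mono) auto
      finally have "k \<le> 4^k" by simp
      then have "real k \<le> real ((4::nat)^k)" by (simp only: of_nat_le_iff)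
      then show ?thesis by simp
    qed
    define n1 where "n1 = nat \<lfloor>4^k / p\<rfloor>"
    define n2 where "n2 = nat \<lfloor>2 * 4^k / p\<rfloor>"
    have p1: "(4::real)^k \<le> 4^k / p" "(4::real)^k \<le> 2 * 4^k / p" using p
      by (auto simp: field_simps)
    have "real N \<le> 4^k" using kN k4 by linarith
    then have "real N \<le> 4^k / p" "real N \<le> 2 * 4^k / p" using p1 by linarith+
    then have "int N \<le> \<lfloor>4^k / p\<rfloor>" "int N \<le> \<lfloor>2 * 4^k / p\<rfloor>"
      by (simp_all only: le_floor_iff of_int_of_nat_eq)
    then have "N \<le> n1" "N \<le> n2" unfolding n1_def n2_def by linarith+
    with N have d: "norm (binomial_mean p aseq n1 - binomial_mean p aseq n2) < 1/2" by blast
    have "1 - 4 / (p * real k ^ 2) \<le> binomial_mean p aseq n1"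
      using p k2 by (intro side1) (auto simp: n1_def)
    moreover have "binomial_mean p aseq n2 \<le> 128 / (p * 4^k)"
      using p k2 by (intro side2) (auto simp: n2_def)
    moreover have "4 / (p * real k ^ 2) \<le> 1/4"
    proof -
      have "512 \<le> real k * p" using kp p by (simp add: field_simps)
      moreover have "real k \<le> real k ^ 2" using k2 by (simp add: power2_eq_square)
      ultimately have "16 \<le> real k ^ 2 * p" using p by (smt (verit) mult_right_mono)
      then show ?thesis using p k2 by (simp add: field_simps)
    qed
    moreover have "128 / (p * 4^k) \<le> 1/4"
    proof -
      have "512 \<le> real k * p" using kp p by (simp add: field_simps)
      then have "512 \<le> 4^k * p" using k4 p by (smt (verit) mult_right_mono)
      then show ?thesis using p by (simp add: field_simps)
    qed
    ultimately show False using d by (simp add: abs_if split: if_splits)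
  qed
qed

end
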